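(* Consider the $M/G/\infty$ queueing system: customers arrive according to a Poisson process of rate $\lambda>0$, there are infinitely many servers (so every arriving customer immediately starts service), and service times are i.i.d. with continuous distribution function $B(x)$, independent of the arrival process. Let $\overline{B}(x)=1-B(x)$ and suppose $B$ has a light tail: there exist constants $C>0$ and $\mu>0$ such that $\overline{B}(x)\le Ce^{-\mu x}$ for all $x\ge 0$. Put $b=\int_0^\infty\overline{B}(x)\,dx$ and $\rho=\lambda b$. Let $Q(t)$ be the number of customers in the system at time $t$, with $P(Q(0)=0)=1$, let $P_k(t)=P(Q(t)=k)$, $P_k=\frac{\rho^k}{k!}e^{-\rho}$ for $k\ge 0$, and $\varphi(t)=\sup_{k\ge 0}|P_k(t)-P_k|$. Then there exist constants $\delta>0$ and $0<C_\delta<\infty$ such that $$\varphi(t)<C_\delta e^{-\delta t}\qquad\text{for all } t\ge 0.$$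
   Context: $P_k$ is the stationary (limiting) distribution of $Q(t)$, i.e. $P_k=\lim_{t\to\infty}P(Q(t)=k)$. *)

theory Defs
  imports "HOL-Probability.Probability"
begin

definition arrival_time :: "(nat \<Rightarrow> 'a \<Rightarrow> real) \<Rightarrow> nat \<Rightarrow> 'a \<Rightarrow> real" where
  "arrival_time E n \<omega> = (\<Sum>i\<le>n. E i \<omega>)"

definition queue_length ::
  "(nat \<Rightarrow> 'a \<Rightarrow> real) \<Rightarrow> (nat \<Rightarrow> 'a \<Rightarrow> real) \<Rightarrow> real \<Rightarrow> 'a \<Rightarrow> nat" where
  "queue_length E S t \<omega> =
     card {n. arrival_time E n \<omega> \<le> t \<and> t < arrival_time E n \<omega> + S n \<omega>}"

definition poisson_prob :: "real \<Rightarrow> nat \<Rightarrow> real" where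
  "poisson_prob \<rho> k = \<rho> ^ k / fact k * exp (- \<rho>)"

end

theory Submission
  imports Defs
begin


definition arr :: "(nat + nat \<Rightarrow> real) \<Rightarrow> nat \<Rightarrow> real" where
  "arr x n = (\<Sum>i\<le>n. x (Inl i))"

definition QS :: "real \<Rightarrow> (nat + nat \<Rightarrow> real) \<Rightarrow> nat set" where
  "QS t x = {n. arr x n \<le> t \<and> t < arr x n + x (Inr n)}"

definition ql :: "real \<Rightarrow> (nat + nat \<Rightarrow> real) \<Rightarrow> nat" where
  "ql t x = card (QS t x)"

definition sh :: "(nat + nat \<Rightarrow> real) \<Rightarrow> (nat + nat \<Rightarrow> real)" where
  "sh x = (\<lambda>i. case i of Inl n \<Rightarrow> x (Inl (Suc n)) | Inr n \<Rightarrow> x (Inr (Suc n)))"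

definition vecf :: "(nat \<Rightarrow> 'a \<Rightarrow> real) \<Rightarrow> (nat \<Rightarrow> 'a \<Rightarrow> real) \<Rightarrow> nat + nat \<Rightarrow> 'a \<Rightarrow> real" where
  "vecf E S i = (case i of Inl n \<Rightarrow> E n | Inr n \<Rightarrow> S n)"

definition vec :: "(nat \<Rightarrow> 'a \<Rightarrow> real) \<Rightarrow> (nat \<Rightarrow> 'a \<Rightarrow> real) \<Rightarrow> 'a \<Rightarrow> nat + nat \<Rightarrow> real" where
  "vec E S \<omega> = (\<lambda>i. vecf E S i \<omega>)"

lemma queue_length_ql: "queue_length E S t \<omega> = ql t (vec E S \<omega>)"
  by (simp add: queue_length_def ql_def QS_def arr_def arrival_time_def vec_def vecf_def)

lemma vec_shift: "sh (vec E S \<omega>) = vec (\<lambda>n. E (Suc n)) (\<lambda>n. S (Suc n)) \<omega>"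
  by (auto simp: sh_def vec_def vecf_def fun_eq_iff split: sum.split)

lemma arr_Suc_sh: "arr x (Suc n) = x (Inl 0) + arr (sh x) n"
  unfolding arr_def sh_def sum.atMost_Suc_shift by simp

lemma QS_decomp: "QS t x = (if x (Inl 0) \<le> t \<and> t < x (Inl 0) + x (Inr 0) then {0} else {})
    \<union> Suc ` QS (t - x (Inl 0)) (sh x)"
proof -
  have "n \<in> QS t x \<longleftrightarrow> n \<in> (if x (Inl 0) \<le> t \<and> t < x (Inl 0) + x (Inr 0) then {0} else {})
    \<union> Suc ` QS (t - x (Inl 0)) (sh x)" for n
  proof (cases n)
    case 0 then show ?thesis by (auto simp: QS_def arr_def)
  next
    case (Suc m)
    have "Suc m \<in> Suc ` QS (t - x (Inl 0)) (sh x) \<longleftrightarrow> m \<in> QS (t - x (Inl 0)) (sh x)" by auto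
    then show ?thesis using Suc by (auto simp: QS_def arr_Suc_sh sh_def)
  qed
  then show ?thesis by blast
qed

lemma ql_decomp:
  assumes "finite (QS (t - x (Inl 0)) (sh x))"
  shows "ql t x = (if x (Inl 0) \<le> t \<and> t < x (Inl 0) + x (Inr 0) then 1 else 0) + ql (t - x (Inl 0)) (sh x)"
proof -
  have "card (Suc ` QS (t - x (Inl 0)) (sh x)) = ql (t - x (Inl 0)) (sh x)"
    by (simp add: card_image ql_def)
  moreover have "0 \<notin> Suc ` QS (t - x (Inl 0)) (sh x)" by auto
  ultimately show ?thesis using assms
    by (subst ql_def, subst QS_decomp) (auto simp: card_insert_if)
qed

lemma arr_mono: "(\<And>n. x (Inl n) \<ge> 0) \<Longrightarrow> m \<le> n \<Longrightarrow> arr x m \<le> arr x n"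
  unfolding arr_def by (intro sum_mono2) auto

lemma arr_nonneg: "(\<And>n. x (Inl n) \<ge> 0) \<Longrightarrow> arr x n \<ge> 0"
  unfolding arr_def by (intro sum_nonneg) auto

lemma QS_neg: assumes "\<And>n. x (Inl n) \<ge> 0" "t < 0" shows "QS t x = {}"
proof -
  have "\<not> arr x n \<le> t" for n using arr_nonneg[of x n, OF assms(1)] assms(2) by linarith
  then show ?thesis by (auto simp: QS_def)
qed

lemma QS_sub: "QS t x \<subseteq> {n. arr x n \<le> t}"
  by (auto simp: QS_def)

lemma finite_arr: assumes "\<And>n. x (Inl n) \<ge> 0" "arr x N > t"
  shows "finite {n. arr x n \<le> t}"
proof -
  have "{n. arr x n \<le> t} \<subseteq> {..<N}"
    using arr_mono[of x, OF assms(1)] assms(2) by (force simp: not_less[symmetric])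
  then show ?thesis using finite_subset by blast
qed


abbreviation "MX \<equiv> PiM (UNIV :: (nat + nat) set) (\<lambda>_. (borel :: real measure))"

definition Pn :: "nat \<Rightarrow> real \<times> (nat + nat \<Rightarrow> real) \<Rightarrow> bool" where
  "Pn n p = (arr (snd p) n \<le> fst p \<and> fst p < arr (snd p) n + snd p (Inr n))"

lemma arr_meas: "(\<lambda>x. arr x n) \<in> borel_measurable MX"
  unfolding arr_def by (intro borel_measurable_sum measurable_component_singleton) auto

lemma Pn_meas[measurable]: "Measurable.pred (borel \<Otimes>\<^sub>M MX) (Pn n)"
proof -
  have [measurable]: "(\<lambda>p. arr (snd p) n) \<in> borel_measurable (borel \<Otimes>\<^sub>M MX)"
    by (rule measurable_compose[OF measurable_snd arr_meas])
  have [measurable]: "(\<lambda>p::real \<times> (nat+nat\<Rightarrow>real). snd p (Inr n)) \<in> borel_measurable (borel \<Otimes>\<^sub>M MX)"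
    by (rule measurable_compose[OF measurable_snd measurable_component_singleton]) simp
  show ?thesis unfolding Pn_def by measurable
qed

definition cnt :: "nat \<Rightarrow> real \<times> (nat + nat \<Rightarrow> real) \<Rightarrow> nat" where
  "cnt N p = card {n. n < N \<and> Pn n p}"

lemma cnt_Suc: "cnt (Suc N) p = cnt N p + (if Pn N p then 1 else 0)"
proof -
  have "{n. n < Suc N \<and> Pn n p} = {n. n < N \<and> Pn n p} \<union> (if Pn N p then {N} else {})"
    by (auto simp: less_Suc_eq)
  then show ?thesis unfolding cnt_def by (auto simp: card_insert_if)
qed

lemma cnt_meas: "Measurable.pred (borel \<Otimes>\<^sub>M MX) (\<lambda>p. cnt N p = k)"
proof (induction N arbitrary: k)
  case 0 then show ?case by (simp add: cnt_def)
next
  case (Suc N)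
  have eq: "(\<lambda>p. cnt (Suc N) p = k) = (\<lambda>p. (Pn N p \<and> k > 0 \<and> cnt N p = k - 1) \<or> (\<not> Pn N p \<and> cnt N p = k))"
    by (auto simp: cnt_Suc fun_eq_iff)
  show ?case unfolding eq using Suc by measurable
qed

lemma ql_char: "(ql (fst p) (snd p) = k) \<longleftrightarrow>
   (k = 0 \<and> (\<forall>N. \<exists>n. N \<le> n \<and> Pn n p)) \<or> (\<exists>N. (\<forall>n. N \<le> n \<longrightarrow> \<not> Pn n p) \<and> cnt N p = k)"
proof -
  have QS: "QS (fst p) (snd p) = {n. Pn n p}" by (auto simp: QS_def Pn_def)
  show ?thesis
  proof (cases "finite {n. Pn n p}")
    case True
    then obtain N where N: "\<forall>n\<in>{n. Pn n p}. n < N" using finite_nat_bounded by blast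
    then have "{n. n < N \<and> Pn n p} = {n. Pn n p}" by auto
    then have c: "cnt N p = ql (fst p) (snd p)" by (simp add: cnt_def ql_def QS)
    have *: "\<forall>n. N \<le> n \<longrightarrow> \<not> Pn n p" using N by force
    have cM: "(\<forall>n. M \<le> n \<longrightarrow> \<not> Pn n p) \<Longrightarrow> cnt M p = ql (fst p) (snd p)" for M
    proof -
      assume "\<forall>n. M \<le> n \<longrightarrow> \<not> Pn n p"
      then have "{n. n < M \<and> Pn n p} = {n. Pn n p}" by (auto simp: not_le[symmetric])
      then show ?thesis by (simp add: cnt_def ql_def QS)
    qed
    have nf: "\<not>(\<forall>N. \<exists>n. N \<le> n \<and> Pn n p)" using * by blast
    show ?thesis
    proof
      assume "ql (fst p) (snd p) = k" then show "(k = 0 \<and> (\<forall>N. \<exists>n. N \<le> n \<and> Pn n p)) \<or> (\<exists>N. (\<forall>n. N \<le> n \<longrightarrow> \<not> Pn n p) \<and> cnt N p = k)"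
        using * c by blast
    next
      assume "(k = 0 \<and> (\<forall>N. \<exists>n. N \<le> n \<and> Pn n p)) \<or> (\<exists>N. (\<forall>n. N \<le> n \<longrightarrow> \<not> Pn n p) \<and> cnt N p = k)"
      then obtain M where "(\<forall>n. M \<le> n \<longrightarrow> \<not> Pn n p)" "cnt M p = k" using nf by blast
      then show "ql (fst p) (snd p) = k" using cM by simp
    qed
  next
    case False
    then have "ql (fst p) (snd p) = 0" by (simp add: ql_def QS)
    moreover have "\<forall>N. \<exists>n. N \<le> n \<and> Pn n p"
    proof
      fix N show "\<exists>n. N \<le> n \<and> Pn n p"
      proof (rule ccontr)
        assume "\<not> ?thesis"
        then have "{n. Pn n p} \<subseteq> {..<N}" by (auto simp: not_le[symmetric])
        then show False using False finite_subset by blast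
      qed
    qed
    ultimately show ?thesis by auto
  qed
qed

lemma ql_pred: "Measurable.pred (borel \<Otimes>\<^sub>M MX) (\<lambda>p. ql (fst p) (snd p) = k)"
  unfolding ql_char
  by (intro pred_intros_conj1' pred_intros_imp' pred_intros_logic pred_intros_countable cnt_meas Pn_meas)

lemma ql_meas2: "(\<lambda>p. ql (fst p) (snd p)) \<in> measurable (borel \<Otimes>\<^sub>M MX) (count_space UNIV)"
proof (rule measurable_count_space_eq2_countable[THEN iffD2], intro conjI ballI)
  fix k
  have "{p \<in> space (borel \<Otimes>\<^sub>M MX). ql (fst p) (snd p) = k} \<in> sets (borel \<Otimes>\<^sub>M MX)"
    using ql_pred[of k] by (simp add: pred_def)
  moreover have "(\<lambda>p. ql (fst p) (snd p)) -` {k} \<inter> space (borel \<Otimes>\<^sub>M MX) = {p \<in> space (borel \<Otimes>\<^sub>M MX). ql (fst p) (snd p) = k}"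
    by blast
  ultimately show "(\<lambda>p. ql (fst p) (snd p)) -` {k} \<inter> space (borel \<Otimes>\<^sub>M MX) \<in> sets (borel \<Otimes>\<^sub>M MX)" by simp
qed simp


lemma (in prob_space) indep_sets_reindex:
  assumes ind: "indep_sets F (f ` I)" and inj: "inj_on f I"
  shows "indep_sets (\<lambda>i. F (f i)) I"
  unfolding indep_sets_def
proof (intro conjI ballI allI impI)
  fix i assume "i \<in> I" then show "F (f i) \<subseteq> events" using ind by (auto simp: indep_sets_def)
next
  fix J A assume J: "J \<subseteq> I" "J \<noteq> {}" "finite J" and A: "A \<in> Pi J (\<lambda>i. F (f i))"
  have injJ: "inj_on f J" using inj J(1) inj_on_subset by blast
  define A' where "A' = (\<lambda>j. A (the_inv_into J f j))"
  have A'f: "A' (f i) = A i" if "i \<in> J" for i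
    unfolding A'_def using the_inv_into_f_f[OF injJ that] by simp
  have "A' \<in> Pi (f ` J) F" using A A'f by auto
  moreover have "f ` J \<subseteq> f ` I" "f ` J \<noteq> {}" "finite (f ` J)" using J by auto
  ultimately have "prob (\<Inter>j\<in>f ` J. A' j) = (\<Prod>j\<in>f ` J. prob (A' j))"
    using ind unfolding indep_sets_def by blast
  moreover have "(\<Inter>j\<in>f ` J. A' j) = (\<Inter>i\<in>J. A i)" using A'f by auto
  moreover have "(\<Prod>j\<in>f ` J. prob (A' j)) = (\<Prod>i\<in>J. prob (A i))"
    using A'f by (simp add: prod.reindex[OF injJ])
  ultimately show "prob (\<Inter>j\<in>J. A j) = (\<Prod>j\<in>J. prob (A j))" by simp
qed

lemma (in prob_space) indep_vars_reindex:
  assumes ind: "indep_vars M' X (f ` I)" and inj: "inj_on f I"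
  shows "indep_vars (\<lambda>i. M' (f i)) (\<lambda>i. X (f i)) I"
  using ind unfolding indep_vars_def2
  by (auto intro: indep_sets_reindex[OF _ inj, where F="\<lambda>i. {X i -` A \<inter> space M |A. A \<in> sets (M' i)}"])

definition shi :: "nat + nat \<Rightarrow> nat + nat" where
  "shi i = (case i of Inl n \<Rightarrow> Inl (Suc n) | Inr n \<Rightarrow> Inr (Suc n))"

lemma inj_shi: "inj shi"
  unfolding inj_def shi_def by (auto split: sum.split)

lemma vecf_shift: "vecf (\<lambda>n. E (Suc n)) (\<lambda>n. S (Suc n)) = (\<lambda>i. vecf E S (shi i))"
  by (auto simp: vecf_def shi_def fun_eq_iff split: sum.split)

definition (in prob_space) fam :: "real \<Rightarrow> (real \<Rightarrow> real) \<Rightarrow> (nat \<Rightarrow> 'a \<Rightarrow> real) \<Rightarrow> (nat \<Rightarrow> 'a \<Rightarrow> real) \<Rightarrow> bool" where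
  "fam lam B E S \<longleftrightarrow> indep_vars (\<lambda>_. borel) (vecf E S) UNIV \<and>
     (\<forall>n. distributed M lborel (E n) (exponential_density lam)) \<and>
     (\<forall>n. S n \<in> borel_measurable M) \<and>
     (\<forall>n x. measure M {\<omega> \<in> space M. S n \<omega> \<le> x} = B x)"

lemma (in prob_space) fam_shift:
  assumes "fam lam B E S" shows "fam lam B (\<lambda>n. E (Suc n)) (\<lambda>n. S (Suc n))"
proof -
  have "indep_vars (\<lambda>_. borel) (vecf E S) (shi ` UNIV)"
    using assms unfolding fam_def by (auto intro: indep_vars_subset)
  then have "indep_vars (\<lambda>_. borel) (\<lambda>i. vecf E S (shi i)) UNIV"
    using indep_vars_reindex[OF _ inj_on_subset[OF inj_shi], of "\<lambda>_. borel" "vecf E S" UNIV] by simp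
  then show ?thesis using assms unfolding fam_def vecf_shift by auto
qed

lemma (in prob_space) fam_vec_meas:
  assumes "fam lam B E S" shows "vec E S \<in> measurable M MX"
proof -
  have "\<And>i. vecf E S i \<in> borel_measurable M"
    using assms unfolding fam_def indep_vars_def by auto
  then have "(\<lambda>\<omega>. \<lambda>i\<in>UNIV. vecf E S i \<omega>) \<in> measurable M MX"
    by (intro measurable_restrict) auto
  then show ?thesis by (simp add: vec_def[abs_def] restrict_def)
qed

lemma (in prob_space) fam_E_meas:
  assumes "fam lam B E S" shows "E n \<in> borel_measurable M"
proof -
  have "vecf E S (Inl n) \<in> borel_measurable M"
    using assms unfolding fam_def indep_vars_def by auto
  then show ?thesis by (simp add: vecf_def)
qed

lemma (in prob_space) fam_E_pos:
  assumes "fam lam B E S" "lam > 0" shows "AE \<omega> in M. \<forall>n. 0 < E n \<omega>"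
proof -
  have "AE \<omega> in M. 0 < E n \<omega>" for n
  proof -
    have D: "distributed M lborel (E n) (exponential_density lam)" using assms unfolding fam_def by auto
    have m: "E n \<in> borel_measurable M" using assms(1) by (rule fam_E_meas)
    have "\<P>(x in M. E n x \<le> 0) = 0"
      using exponential_distributedD_le[OF D _ assms(2), of 0] by simp
    then show ?thesis using m
      by (intro AE_I[where N="{x\<in>space M. E n x \<le> 0}"]) (auto simp: emeasure_eq_measure)
  qed
  then show ?thesis by (simp add: AE_all_countable)
qed


abbreviation "MA \<equiv> PiM ({Inl 0, Inr 0} :: (nat + nat) set) (\<lambda>_. (borel :: real measure))"

lemma (in prob_space) fam_indep_YZ:
  assumes "fam lam B E S"
  shows "indep_var MA (\<lambda>\<omega>. restrict (vec E S \<omega>) {Inl 0, Inr 0}) MX (vec (\<lambda>n. E (Suc n)) (\<lambda>n. S (Suc n)))"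
proof -
  let ?X = "vecf E S"
  have ind: "indep_vars (\<lambda>_. borel) ?X UNIV" using assms unfolding fam_def by auto
  let ?A = "{Inl 0, Inr 0} :: (nat + nat) set"
  let ?B = "range shi"
  have disj: "?A \<inter> ?B = {}" by (auto simp: shi_def split: sum.splits)
  have iv: "indep_var (PiM ?A (\<lambda>_. borel)) (\<lambda>\<omega>. restrict (\<lambda>i. ?X i \<omega>) ?A) (PiM ?B (\<lambda>_. borel)) (\<lambda>\<omega>. restrict (\<lambda>i. ?X i \<omega>) ?B)"
    by (rule indep_var_restrict[OF ind disj]) auto
  have f: "(\<lambda>r. r) \<in> measurable (PiM ?A (\<lambda>_. borel)) MA"
    by simp
  have g0: "(\<lambda>r. \<lambda>i\<in>UNIV. r (shi i)) \<in> measurable (PiM ?B (\<lambda>_. borel)) MX"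
    by (intro measurable_restrict measurable_component_singleton) auto
  have g: "(\<lambda>r. \<lambda>i. r (shi i)) \<in> measurable (PiM ?B (\<lambda>_. borel)) MX"
    using g0 by (simp add: restrict_def)
  have "indep_var MA ((\<lambda>r. r) \<circ> (\<lambda>\<omega>. restrict (\<lambda>i. ?X i \<omega>) ?A))
      MX ((\<lambda>r. \<lambda>i. r (shi i)) \<circ> (\<lambda>\<omega>. restrict (\<lambda>i. ?X i \<omega>) ?B))"
    by (rule indep_var_compose[OF iv f g])
  moreover have "(\<lambda>r. r) \<circ> (\<lambda>\<omega>. restrict (\<lambda>i. ?X i \<omega>) ?A) = (\<lambda>\<omega>. restrict (vec E S \<omega>) {Inl 0, Inr 0})"
    by (auto simp: fun_eq_iff vec_def)
  moreover have "(\<lambda>r. \<lambda>i. r (shi i)) \<circ> (\<lambda>\<omega>. restrict (\<lambda>i. ?X i \<omega>) ?B) = vec (\<lambda>n. E (Suc n)) (\<lambda>n. S (Suc n))"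
    by (auto simp: fun_eq_iff vec_def vecf_shift)
  ultimately show ?thesis by simp
qed

lemma (in prob_space) fam_indep_ES:
  assumes "fam lam B E S"
  shows "indep_var borel (E 0) borel (S 0)"
proof -
  let ?X = "vecf E S"
  have ind: "indep_vars (\<lambda>_. borel) ?X UNIV" using assms unfolding fam_def by auto
  let ?A = "{Inl 0} :: (nat + nat) set"
  let ?B = "{Inr 0} :: (nat + nat) set"
  have iv: "indep_var (PiM ?A (\<lambda>_. borel)) (\<lambda>\<omega>. restrict (\<lambda>i. ?X i \<omega>) ?A) (PiM ?B (\<lambda>_. borel)) (\<lambda>\<omega>. restrict (\<lambda>i. ?X i \<omega>) ?B)"
    by (rule indep_var_restrict[OF ind]) auto
  have f: "(\<lambda>r. r (Inl 0)) \<in> measurable (PiM ?A (\<lambda>_. borel)) (borel :: real measure)"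
    by (intro measurable_component_singleton) auto
  have g: "(\<lambda>r. r (Inr 0)) \<in> measurable (PiM ?B (\<lambda>_. borel)) (borel :: real measure)"
    by (intro measurable_component_singleton) auto
  have "indep_var borel ((\<lambda>r. r (Inl 0)) \<circ> (\<lambda>\<omega>. restrict (\<lambda>i. ?X i \<omega>) ?A))
      borel ((\<lambda>r. r (Inr 0)) \<circ> (\<lambda>\<omega>. restrict (\<lambda>i. ?X i \<omega>) ?B))"
    by (rule indep_var_compose[OF iv f g])
  moreover have "(\<lambda>r. r (Inl 0)) \<circ> (\<lambda>\<omega>. restrict (\<lambda>i. ?X i \<omega>) ?A) = E 0"
    by (auto simp: fun_eq_iff vecf_def)
  moreover have "(\<lambda>r. r (Inr 0)) \<circ> (\<lambda>\<omega>. restrict (\<lambda>i. ?X i \<omega>) ?B) = S 0"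
    by (auto simp: fun_eq_iff vecf_def)
  ultimately show ?thesis by simp
qed


lemma (in prob_space) fam_vec_Inl: "vec E S \<omega> (Inl n) = E n \<omega>"
  by (simp add: vec_def vecf_def)
lemma (in prob_space) fam_vec_Inr: "vec E S \<omega> (Inr n) = S n \<omega>"
  by (simp add: vec_def vecf_def)

lemma arr_all_pred: "Measurable.pred MX (\<lambda>z. \<forall>n. arr z n \<le> t)"
  using arr_meas by measurable

lemma (in prob_space) inf_step:
  assumes F: "fam lam B E S" and lam: "lam > 0" and t: "t \<ge> 0"
  shows "prob {\<omega>\<in>space M. \<forall>n. arr (vec E S \<omega>) n \<le> t} \<le>
    (1 - exp (- t * lam)) * prob {\<omega>\<in>space M. \<forall>n. arr (vec (\<lambda>n. E (Suc n)) (\<lambda>n. S (Suc n)) \<omega>) n \<le> t}"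
proof -
  let ?Y = "\<lambda>\<omega>. restrict (vec E S \<omega>) {Inl 0, Inr 0}"
  let ?Z = "vec (\<lambda>n. E (Suc n)) (\<lambda>n. S (Suc n))"
  let ?D = "{r \<in> space MA. r (Inl 0) \<le> t}"
  let ?C = "{z \<in> space MX. \<forall>n. arr z n \<le> t}"
  have iv: "indep_var MA ?Y MX ?Z" by (rule fam_indep_YZ[OF F])
  have Dm: "?D \<in> sets MA"
  proof -
    have "Measurable.pred MA (\<lambda>r. r (Inl 0) \<le> t)" by measurable
    then show ?thesis by (simp add: pred_def)
  qed
  have Cm: "?C \<in> sets MX" using arr_all_pred[of t] by (simp add: pred_def)
  have eq: "prob ((\<lambda>x. (?Y x, ?Z x)) -` (?D \<times> ?C) \<inter> space M) = prob (?Y -` ?D \<inter> space M) * prob (?Z -` ?C \<inter> space M)"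
    by (rule indep_varD[OF iv Dm Cm])
  have Ym: "?Y \<in> measurable M MA" using iv by (rule indep_var_rv1)
  have Zm: "?Z \<in> measurable M MX" using iv by (rule indep_var_rv2)
  have "?Y -` ?D \<inter> space M = {\<omega> \<in> space M. E 0 \<omega> \<le> t}"
    using measurable_space[OF Ym] by (auto simp: fam_vec_Inl)
  moreover have "prob {\<omega> \<in> space M. E 0 \<omega> \<le> t} = 1 - exp (- t * lam)"
    using exponential_distributedD_le[of "E 0" lam t] F t lam unfolding fam_def by auto
  moreover have "?Z -` ?C \<inter> space M = {\<omega>\<in>space M. \<forall>n. arr (?Z \<omega>) n \<le> t}"
    using measurable_space[OF Zm] by auto
  ultimately have eq2: "prob ((\<lambda>x. (?Y x, ?Z x)) -` (?D \<times> ?C) \<inter> space M) = (1 - exp (- t * lam)) * prob {\<omega>\<in>space M. \<forall>n. arr (?Z \<omega>) n \<le> t}"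
    using eq by simp
  have "AE \<omega> in M. \<omega> \<in> {\<omega>\<in>space M. \<forall>n. arr (vec E S \<omega>) n \<le> t} \<longrightarrow> \<omega> \<in> (\<lambda>x. (?Y x, ?Z x)) -` (?D \<times> ?C) \<inter> space M"
    using fam_E_pos[OF F lam]
  proof (eventually_elim)
    case (elim \<omega>)
    show ?case
    proof
      assume a: "\<omega> \<in> {\<omega> \<in> space M. \<forall>n. arr (vec E S \<omega>) n \<le> t}"
      then have sp: "\<omega> \<in> space M" by auto
      have "arr (?Z \<omega>) n \<le> t" for n
      proof -
        have "arr (vec E S \<omega>) (Suc n) \<le> t" using a by auto
        then have h: "E 0 \<omega> + arr (?Z \<omega>) n \<le> t" unfolding arr_Suc_sh vec_shift by (simp add: fam_vec_Inl)
        have "0 < E 0 \<omega>" using elim by auto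
        then show ?thesis using h by linarith
      qed
      moreover have "E 0 \<omega> \<le> t" using a[simplified, THEN conjunct2, THEN spec[of _ 0]] by (simp add: arr_def fam_vec_Inl)
      ultimately show "\<omega> \<in> (\<lambda>x. (?Y x, ?Z x)) -` (?D \<times> ?C) \<inter> space M"
        using sp measurable_space[OF Ym sp] measurable_space[OF Zm sp] by (auto simp: fam_vec_Inl)
    qed
  qed
  then have "prob {\<omega>\<in>space M. \<forall>n. arr (vec E S \<omega>) n \<le> t} \<le> prob ((\<lambda>x. (?Y x, ?Z x)) -` (?D \<times> ?C) \<inter> space M)"
    by (rule finite_measure_mono_AE) (intro measurable_sets[OF measurable_Pair[OF Ym Zm]] pair_measureI Dm Cm)
  then show ?thesis using eq2 by simp
qed

lemma (in prob_space) inf_zero: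
  assumes lam: "lam > 0" and t: "t \<ge> 0"
  shows "\<forall>E S. fam lam B E S \<longrightarrow> prob {\<omega>\<in>space M. \<forall>n. arr (vec E S \<omega>) n \<le> t} = 0"
proof -
  let ?c = "1 - exp (- t * lam)"
  have c: "0 \<le> ?c" "?c < 1" using lam t by auto
  have bnd: "\<forall>E S. fam lam B E S \<longrightarrow> prob {\<omega>\<in>space M. \<forall>n. arr (vec E S \<omega>) n \<le> t} \<le> ?c ^ k" for k
  proof (induction k)
    case 0 then show ?case by simp
  next
    case (Suc k)
    show ?case
    proof (intro allI impI)
      fix E S assume F: "fam lam B E S"
      have "prob {\<omega>\<in>space M. \<forall>n. arr (vec E S \<omega>) n \<le> t} \<le>
        ?c * prob {\<omega>\<in>space M. \<forall>n. arr (vec (\<lambda>n. E (Suc n)) (\<lambda>n. S (Suc n)) \<omega>) n \<le> t}"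
        by (rule inf_step[OF F lam t])
      also have "\<dots> \<le> ?c * ?c ^ k"
        using Suc fam_shift[OF F] c by (intro mult_left_mono) auto
      finally show "prob {\<omega>\<in>space M. \<forall>n. arr (vec E S \<omega>) n \<le> t} \<le> ?c ^ Suc k" by simp
    qed
  qed
  show ?thesis
  proof (intro allI impI)
    fix E S assume F: "fam lam B E S"
    let ?p = "prob {\<omega>\<in>space M. \<forall>n. arr (vec E S \<omega>) n \<le> t}"
    have "(\<lambda>k. ?c ^ k) \<longlonglongrightarrow> 0" using c by (intro LIMSEQ_power_zero) auto
    moreover have "\<forall>k. ?p \<le> ?c ^ k" using bnd F by auto
    ultimately have "?p \<le> 0" by (intro LIMSEQ_le_const) auto
    then show "?p = 0" using measure_nonneg[of M] by (simp add: antisym)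
  qed
qed

lemma (in prob_space) fam_finite:
  assumes F: "fam lam B E S" and lam: "lam > 0"
  shows "AE \<omega> in M. finite {n. arr (vec E S \<omega>) n \<le> t}"
proof -
  let ?t = "max t 0"
  have Vm: "vec E S \<in> measurable M MX" by (rule fam_vec_meas[OF F])
  have sets: "{\<omega>\<in>space M. \<forall>n. arr (vec E S \<omega>) n \<le> ?t} \<in> sets M"
    using measurable_compose[OF Vm arr_all_pred[of ?t, unfolded pred_def[symmetric]]] 
    by (simp add: pred_def)
  have "prob {\<omega>\<in>space M. \<forall>n. arr (vec E S \<omega>) n \<le> ?t} = 0"
    using inf_zero[OF lam, of ?t B] F by auto
  then have "AE \<omega> in M. \<not> (\<forall>n. arr (vec E S \<omega>) n \<le> ?t)"
    using sets by (intro AE_I[where N="{\<omega>\<in>space M. \<forall>n. arr (vec E S \<omega>) n \<le> ?t}"]) (auto simp: emeasure_eq_measure)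
  then show ?thesis using fam_E_pos[OF F lam]
  proof eventually_elim
    case (elim \<omega>)
    then obtain N where N: "arr (vec E S \<omega>) N > ?t" by (auto simp: not_le)
    have pos: "\<And>n. vec E S \<omega> (Inl n) \<ge> 0" using elim by (simp add: fam_vec_Inl less_imp_le)
    have "finite {n. arr (vec E S \<omega>) n \<le> ?t}" by (rule finite_arr[OF pos N])
    then show ?case by (rule rev_finite_subset) auto
  qed
qed


lemma measure_pair_integral:
  assumes P1: "prob_space M1" and P2: "prob_space M2" and A: "A \<in> sets (M1 \<Otimes>\<^sub>M M2)"
  shows "measure (M1 \<Otimes>\<^sub>M M2) A = (\<integral>x. measure M2 (Pair x -` A) \<partial>M1)"
proof -
  interpret p1: prob_space M1 by fact
  interpret p2: prob_space M2 by fact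
  interpret pair_prob_space M1 M2 ..
  have m: "(\<lambda>x. emeasure M2 (Pair x -` A)) \<in> borel_measurable M1"
    by (rule p2.measurable_emeasure_Pair[OF A])
  have m2: "(\<lambda>x. measure M2 (Pair x -` A)) \<in> borel_measurable M1"
    using borel_measurable_enn2real[OF m] by (simp add: measure_def)
  have int: "integrable M1 (\<lambda>x. measure M2 (Pair x -` A))"
    by (rule p1.integrable_const_bound[where B=1]) (auto intro: m2)
  have "emeasure (M1 \<Otimes>\<^sub>M M2) A = (\<integral>\<^sup>+x. emeasure M2 (Pair x -` A) \<partial>M1)"
    by (rule p2.emeasure_pair_measure_alt[OF A])
  also have "\<dots> = (\<integral>\<^sup>+x. ennreal (measure M2 (Pair x -` A)) \<partial>M1)"
    by (simp add: p2.emeasure_eq_measure)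
  also have "\<dots> = ennreal (\<integral>x. measure M2 (Pair x -` A) \<partial>M1)"
    by (rule nn_integral_eq_integral[OF int]) auto
  finally show ?thesis
    by (simp add: measure_def integral_nonneg_AE)
qed

definition (in prob_space) PF :: "(nat \<Rightarrow> 'a \<Rightarrow> real) \<Rightarrow> (nat \<Rightarrow> 'a \<Rightarrow> real) \<Rightarrow> real \<Rightarrow> nat \<Rightarrow> real" where
  "PF E S t k = prob {\<omega> \<in> space M. ql t (vec E S \<omega>) = k}"

lemma ql_t_pred: "Measurable.pred MX (\<lambda>z. ql (f z) z = k)" if "f \<in> borel_measurable MX"
proof -
  have "(\<lambda>z. (f z, z)) \<in> measurable MX (borel \<Otimes>\<^sub>M MX)"
    using that by (intro measurable_Pair) auto
  from measurable_compose[OF this ql_pred[of k, unfolded pred_def[symmetric]]]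
  show ?thesis by simp
qed

lemma (in prob_space) PF_sets:
  assumes "fam lam B E S" shows "{\<omega> \<in> space M. ql t (vec E S \<omega>) = k} \<in> events"
proof -
  have "Measurable.pred M (\<lambda>\<omega>. ql t (vec E S \<omega>) = k)"
    using measurable_compose[OF fam_vec_meas[OF assms] ql_t_pred[of "\<lambda>_. t" k]] by (simp add: pred_def)
  then show ?thesis by (simp add: pred_def)
qed

lemma (in prob_space) PF_bounds: "0 \<le> PF E S t k" "PF E S t k \<le> 1"
  by (auto simp: PF_def)

lemma (in prob_space) PF_meas:
  assumes F: "fam lam B E S" shows "(\<lambda>v. PF E S v k) \<in> borel_measurable borel"
proof -
  let ?L = "distr M MX (vec E S)"
  have Vm: "vec E S \<in> measurable M MX" by (rule fam_vec_meas[OF F])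
  interpret L: prob_space ?L by (rule prob_space_distr[OF Vm])
  let ?A = "{p \<in> space (borel \<Otimes>\<^sub>M MX). ql (fst p) (snd p) = k}"
  have A: "?A \<in> sets (borel \<Otimes>\<^sub>M MX)" using ql_pred[of k] by (simp add: pred_def)
  have m: "(\<lambda>v. emeasure ?L (Pair v -` ?A)) \<in> borel_measurable borel"
  proof (rule L.measurable_emeasure_Pair)
    show "?A \<in> sets (borel \<Otimes>\<^sub>M ?L)" using A by (subst sets_pair_measure_cong[OF refl sets_distr])
  qed
  have eq: "enn2real (emeasure ?L (Pair v -` ?A)) = PF E S v k" for v
  proof -
    have s: "Pair v -` ?A = {z \<in> space MX. ql v z = k}" by (auto simp: space_pair_measure)
    have ss: "{z \<in> space MX. ql v z = k} \<in> sets MX" using ql_t_pred[of "\<lambda>_. v" k] by (simp add: pred_def)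
    have "enn2real (emeasure ?L (Pair v -` ?A)) = measure ?L {z \<in> space MX. ql v z = k}"
      unfolding s by (simp add: measure_def)
    also have "\<dots> = prob (vec E S -` {z \<in> space MX. ql v z = k} \<inter> space M)"
      by (rule measure_distr[OF Vm ss])
    also have "vec E S -` {z \<in> space MX. ql v z = k} \<inter> space M = {\<omega> \<in> space M. ql v (vec E S \<omega>) = k}"
      using measurable_space[OF Vm] by auto
    finally show ?thesis by (simp add: PF_def)
  qed
  show ?thesis using borel_measurable_enn2real[OF m] unfolding eq .
qed


definition Phi :: "(real \<Rightarrow> real) \<Rightarrow> real \<Rightarrow> nat \<Rightarrow> (real \<Rightarrow> nat \<Rightarrow> real) \<Rightarrow> real \<Rightarrow> real" where
  "Phi B t k f e = (if e \<le> t then B (t - e) * f (t - e) k + (1 - B (t - e)) * (if k = 0 then 0 else f (t - e) (k - 1))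
     else f (t - e) k)"

lemma (in prob_space) Phi_meas:
  assumes "\<And>j. (\<lambda>v. f v j) \<in> borel_measurable borel" and "B \<in> borel_measurable borel"
  shows "Phi B t k f \<in> borel_measurable borel"
proof -
  have [measurable]: "(\<lambda>e. f (t - e) j) \<in> borel_measurable borel" for j
    using measurable_compose[of "\<lambda>e. t - e" borel borel "\<lambda>v. f v j"] assms(1) by auto
  have [measurable]: "(\<lambda>e. B (t - e)) \<in> borel_measurable borel"
    using measurable_compose[of "\<lambda>e. t - e" borel borel B] assms(2) by auto
  show ?thesis unfolding Phi_def[abs_def] by measurable
qed

lemma (in prob_space) recursion:
  assumes F: "fam lam B E S" and lam: "lam > 0" and Bm: "B \<in> borel_measurable borel"
  shows "PF E S t k = (\<integral>\<omega>. Phi B t k (PF (\<lambda>n. E (Suc n)) (\<lambda>n. S (Suc n))) (E 0 \<omega>) \<partial>M)"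
proof -
  define E' where "E' = (\<lambda>n. E (Suc n))"
  define S' where "S' = (\<lambda>n. S (Suc n))"
  have F': "fam lam B E' S'" unfolding E'_def S'_def by (rule fam_shift[OF F])
  define Y where "Y = (\<lambda>\<omega>. restrict (vec E S \<omega>) {Inl 0, Inr 0})"
  define Z where "Z = vec E' S'"
  have iv: "indep_var MA Y MX Z" unfolding Y_def Z_def E'_def S'_def by (rule fam_indep_YZ[OF F])
  have Ym: "Y \<in> measurable M MA" using iv by (rule indep_var_rv1)
  have Zm: "Z \<in> measurable M MX" using iv by (rule indep_var_rv2)
  have YInl: "Y \<omega> (Inl 0) = E 0 \<omega>" and YInr: "Y \<omega> (Inr 0) = S 0 \<omega>" for \<omega>
    by (simp_all add: Y_def fam_vec_Inl fam_vec_Inr)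
  define h where "h = (\<lambda>(y::nat+nat\<Rightarrow>real) z. (if y (Inl 0) \<le> t \<and> t < y (Inl 0) + y (Inr 0) then 1 else 0) + ql (t - y (Inl 0)) z)"
  define A where "A = {p \<in> space (MA \<Otimes>\<^sub>M MX). h (fst p) (snd p) = k}"
  have ql_comp: "Measurable.pred (MA \<Otimes>\<^sub>M MX) (\<lambda>p. ql (t - fst p (Inl 0)) (snd p) = j)" for j
  proof -
    have "(\<lambda>p. (t - fst p (Inl 0), snd p)) \<in> measurable (MA \<Otimes>\<^sub>M MX) (borel \<Otimes>\<^sub>M MX)"
      by measurable
    from measurable_compose[OF this ql_pred[of j, unfolded pred_def[symmetric]]]
    show ?thesis by simp
  qed
  have Am: "A \<in> sets (MA \<Otimes>\<^sub>M MX)"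
  proof -
    have eq: "(\<lambda>p. h (fst p) (snd p) = k) = (\<lambda>p. (fst p (Inl 0) \<le> t \<and> t < fst p (Inl 0) + fst p (Inr 0) \<and> 0 < k \<and> ql (t - fst p (Inl 0)) (snd p) = k - 1)
       \<or> (\<not> (fst p (Inl 0) \<le> t \<and> t < fst p (Inl 0) + fst p (Inr 0)) \<and> ql (t - fst p (Inl 0)) (snd p) = k))"
      by (auto simp: h_def fun_eq_iff)
    have [measurable]: "Measurable.pred (MA \<Otimes>\<^sub>M MX) (\<lambda>p. ql (t - fst p (Inl 0)) (snd p) = j)" for j
      by (rule ql_comp)
    have "Measurable.pred (MA \<Otimes>\<^sub>M MX) (\<lambda>p. h (fst p) (snd p) = k)"
      unfolding eq by measurable
    then show ?thesis by (simp add: A_def pred_def)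
  qed
  have ae: "AE \<omega> in M. ql t (vec E S \<omega>) = h (Y \<omega>) (Z \<omega>)"
    using fam_finite[OF F' lam, of t] fam_E_pos[OF F lam]
  proof eventually_elim
    case (elim \<omega>)
    let ?x = "vec E S \<omega>"
    have shx: "sh ?x = Z \<omega>" by (simp add: Z_def vec_shift E'_def S'_def)
    have x0: "?x (Inl 0) = E 0 \<omega>" by (simp add: fam_vec_Inl)
    have "QS (t - ?x (Inl 0)) (sh ?x) \<subseteq> {n. arr (Z \<omega>) n \<le> t}"
      using QS_sub[of "t - ?x (Inl 0)" "sh ?x"] elim(2) shx x0
      by (smt (verit, best) mem_Collect_eq subset_iff)
    then have fin: "finite (QS (t - ?x (Inl 0)) (sh ?x))"
      using elim(1) Z_def finite_subset by blast
    show ?case using ql_decomp[OF fin] shx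
      by (simp add: h_def YInl YInr x0 fam_vec_Inr)
  qed
  have Wm: "(\<lambda>\<omega>. (Y \<omega>, Z \<omega>)) \<in> measurable M (MA \<Otimes>\<^sub>M MX)" using Ym Zm by (rule measurable_Pair)
  have s1: "PF E S t k = prob ((\<lambda>\<omega>. (Y \<omega>, Z \<omega>)) -` A \<inter> space M)"
    unfolding PF_def
  proof (rule finite_measure_eq_AE)
    show "AE x in M. (x \<in> {\<omega> \<in> space M. ql t (vec E S \<omega>) = k}) = (x \<in> (\<lambda>\<omega>. (Y \<omega>, Z \<omega>)) -` A \<inter> space M)"
      using ae
    proof eventually_elim
      case (elim x)
      show ?case
      proof (cases "x \<in> space M")
        case True
        then have "(Y x, Z x) \<in> space (MA \<Otimes>\<^sub>M MX)" using measurable_space[OF Wm] by auto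
        then show ?thesis using True elim by (auto simp: A_def)
      qed auto
    qed
    show "{\<omega> \<in> space M. ql t (vec E S \<omega>) = k} \<in> events" by (rule PF_sets[OF F])
    show "(\<lambda>\<omega>. (Y \<omega>, Z \<omega>)) -` A \<inter> space M \<in> events" by (rule measurable_sets[OF Wm Am])
  qed
  let ?LY = "distr M MA Y" and ?LZ = "distr M MX Z"
  have PY: "prob_space ?LY" by (rule prob_space_distr[OF Ym])
  have PZ: "prob_space ?LZ" by (rule prob_space_distr[OF Zm])
  have prodeq: "?LY \<Otimes>\<^sub>M ?LZ = distr M (MA \<Otimes>\<^sub>M MX) (\<lambda>\<omega>. (Y \<omega>, Z \<omega>))"
    using iv by (simp add: indep_var_distribution_eq)
  have s3: "prob ((\<lambda>\<omega>. (Y \<omega>, Z \<omega>)) -` A \<inter> space M) = measure (?LY \<Otimes>\<^sub>M ?LZ) A"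
    unfolding prodeq by (rule measure_distr[OF Wm Am, symmetric])
  have Am': "A \<in> sets (?LY \<Otimes>\<^sub>M ?LZ)"
    using Am by (subst sets_pair_measure_cong[OF sets_distr sets_distr])
  have s4: "measure (?LY \<Otimes>\<^sub>M ?LZ) A = (\<integral>y. measure ?LZ (Pair y -` A) \<partial>?LY)"
    by (rule measure_pair_integral[OF PY PZ Am'])
  define G where "G = (\<lambda>e s. if e \<le> t \<and> t < e + s then (if k = 0 then 0 else PF E' S' (t - e) (k - 1)) else PF E' S' (t - e) k)"
  have s5: "measure ?LZ (Pair y -` A) = G (y (Inl 0)) (y (Inr 0))" if y: "y \<in> space MA" for y
  proof -
    have sl: "Pair y -` A = {z \<in> space MX. h y z = k}" using y by (auto simp: A_def space_pair_measure)
    have sls: "{z \<in> space MX. h y z = k} \<in> sets MX" using Am y by (metis sl sets_Pair1)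
    have "measure ?LZ (Pair y -` A) = prob (Z -` {z \<in> space MX. h y z = k} \<inter> space M)"
      unfolding sl by (rule measure_distr[OF Zm sls])
    also have "Z -` {z \<in> space MX. h y z = k} \<inter> space M = {\<omega> \<in> space M. h y (Z \<omega>) = k}"
      using measurable_space[OF Zm] by auto
    also have "prob {\<omega> \<in> space M. h y (Z \<omega>) = k} = G (y (Inl 0)) (y (Inr 0))"
    proof (cases "y (Inl 0) \<le> t \<and> t < y (Inl 0) + y (Inr 0)")
      case True
      show ?thesis
      proof (cases "k = 0")
        case True
        then have eq: "{\<omega> \<in> space M. h y (Z \<omega>) = k} = {}" using \<open>y (Inl 0) \<le> t \<and> _\<close> by (auto simp: h_def)
        show ?thesis unfolding eq using True \<open>y (Inl 0) \<le> t \<and> _\<close> by (simp add: G_def)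
      next
        case False
        then have eq: "{\<omega> \<in> space M. h y (Z \<omega>) = k} = {\<omega> \<in> space M. ql (t - y (Inl 0)) (vec E' S' \<omega>) = k - 1}"
          using \<open>y (Inl 0) \<le> t \<and> _\<close> by (auto simp: h_def Z_def)
        show ?thesis unfolding eq using False \<open>y (Inl 0) \<le> t \<and> _\<close> by (simp add: G_def PF_def)
      qed
    next
      case False
      then have eq: "{\<omega> \<in> space M. h y (Z \<omega>) = k} = {\<omega> \<in> space M. ql (t - y (Inl 0)) (vec E' S' \<omega>) = k}"
        by (auto simp: h_def Z_def)
      show ?thesis unfolding eq G_def PF_def by (simp only: if_not_P[OF False])
    qed
    finally show ?thesis .
  qed
  have PFm: "(\<lambda>v. PF E' S' v j) \<in> borel_measurable borel" for j by (rule PF_meas[OF F'])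
  have Gm: "(\<lambda>p. G (fst p) (snd p)) \<in> borel_measurable (borel \<Otimes>\<^sub>M borel)"
  proof -
    have [measurable]: "(\<lambda>p::real\<times>real. PF E' S' (t - fst p) j) \<in> borel_measurable (borel \<Otimes>\<^sub>M borel)" for j
      using measurable_compose[of "\<lambda>p::real\<times>real. t - fst p" "borel \<Otimes>\<^sub>M borel" borel "\<lambda>v. PF E' S' v j"] PFm by auto
    show ?thesis unfolding G_def by measurable
  qed
  have Gb: "\<bar>G e s\<bar> \<le> 1" for e s by (auto simp: G_def PF_bounds abs_le_iff intro: order_trans[OF _ PF_bounds(1)])
  have YGm: "(\<lambda>y. G (y (Inl 0)) (y (Inr 0))) \<in> borel_measurable MA"
  proof -
    have "(\<lambda>y. (y (Inl 0), y (Inr 0))) \<in> measurable MA (borel \<Otimes>\<^sub>M borel)" by measurable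
    from measurable_compose[OF this Gm] show ?thesis by simp
  qed
  have s5': "(\<integral>y. measure ?LZ (Pair y -` A) \<partial>?LY) = (\<integral>y. G (y (Inl 0)) (y (Inr 0)) \<partial>?LY)"
    by (rule Bochner_Integration.integral_cong[OF refl]) (simp add: s5)
  have s6: "(\<integral>y. G (y (Inl 0)) (y (Inr 0)) \<partial>?LY) = (\<integral>\<omega>. G (E 0 \<omega>) (S 0 \<omega>) \<partial>M)"
    by (subst integral_distr[OF Ym YGm]) (simp add: YInl YInr)
  have ies: "indep_var borel (E 0) borel (S 0)" by (rule fam_indep_ES[OF F])
  have E0m: "E 0 \<in> borel_measurable M" by (rule fam_E_meas[OF F])
  have S0m: "S 0 \<in> borel_measurable M" using F unfolding fam_def by auto
  have ESm: "(\<lambda>\<omega>. (E 0 \<omega>, S 0 \<omega>)) \<in> measurable M (borel \<Otimes>\<^sub>M borel)" using E0m S0m by (rule measurable_Pair)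
  let ?LE = "distr M borel (E 0)" and ?LS = "distr M borel (S 0)"
  interpret LE: prob_space ?LE by (rule prob_space_distr[OF E0m])
  interpret LS: prob_space ?LS by (rule prob_space_distr[OF S0m])
  interpret LES: pair_prob_space ?LE ?LS ..
  have peq: "?LE \<Otimes>\<^sub>M ?LS = distr M (borel \<Otimes>\<^sub>M borel) (\<lambda>\<omega>. (E 0 \<omega>, S 0 \<omega>))"
    using ies by (simp add: indep_var_distribution_eq)
  have Gm': "(\<lambda>p. G (fst p) (snd p)) \<in> borel_measurable (?LE \<Otimes>\<^sub>M ?LS)"
    using Gm by (simp add: measurable_def sets_pair_measure_cong[OF sets_distr sets_distr] space_pair_measure)
  have intG: "integrable (?LE \<Otimes>\<^sub>M ?LS) (\<lambda>p. G (fst p) (snd p))"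
    using Gb by (intro LES.P.integrable_const_bound[where B=1] Gm') auto
  have s7: "(\<integral>\<omega>. G (E 0 \<omega>) (S 0 \<omega>) \<partial>M) = (\<integral>e. (\<integral>s. G e s \<partial>?LS) \<partial>?LE)"
  proof -
    have "(\<integral>\<omega>. G (E 0 \<omega>) (S 0 \<omega>) \<partial>M) = (\<integral>p. G (fst p) (snd p) \<partial>(distr M (borel \<Otimes>\<^sub>M borel) (\<lambda>\<omega>. (E 0 \<omega>, S 0 \<omega>))))"
      by (subst integral_distr[OF ESm Gm]) simp
    also have "\<dots> = (\<integral>p. G (fst p) (snd p) \<partial>(?LE \<Otimes>\<^sub>M ?LS))" unfolding peq ..
    also have "\<dots> = (\<integral>e. (\<integral>s. G e s \<partial>?LS) \<partial>?LE)"
      using LES.integral_fst'[OF intG] by simp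
    finally show ?thesis .
  qed
  have s8: "(\<integral>s. G e s \<partial>?LS) = Phi B t k (PF E' S') e" for e
  proof -
    have "(\<lambda>s. (e, s)) \<in> measurable borel (borel \<Otimes>\<^sub>M borel)" by measurable
    from measurable_compose[OF this Gm] have Gem: "G e \<in> borel_measurable borel" by simp
    have "(\<integral>s. G e s \<partial>?LS) = (\<integral>\<omega>. G e (S 0 \<omega>) \<partial>M)"
      by (rule integral_distr[OF S0m Gem])
    also have "\<dots> = Phi B t k (PF E' S') e"
    proof (cases "e \<le> t")
      case True
      let ?a = "(if k = 0 then 0 else PF E' S' (t - e) (k - 1))" and ?b = "PF E' S' (t - e) k"
      let ?U = "{\<omega> \<in> space M. t - e < S 0 \<omega>}" and ?V = "{\<omega> \<in> space M. S 0 \<omega> \<le> t - e}"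
      have Us: "?U \<in> events" and Vs: "?V \<in> events" using S0m by measurable
      have "(\<integral>\<omega>. G e (S 0 \<omega>) \<partial>M) = (\<integral>\<omega>. ?a * indicator ?U \<omega> + ?b * indicator ?V \<omega> \<partial>M)"
        using True by (intro Bochner_Integration.integral_cong) (auto simp: G_def indicator_def)
      also have "\<dots> = ?a * prob ?U + ?b * prob ?V"
        using Us Vs by (simp add: Bochner_Integration.integral_add integrable_real_indicator emeasure_eq_measure)
      also have "prob ?V = B (t - e)" using F unfolding fam_def by auto
      also have "?U = space M - ?V" by auto
      also have "prob (space M - ?V) = 1 - B (t - e)" using prob_compl[OF Vs] \<open>prob ?V = B (t - e)\<close> by simp
      finally show ?thesis using True by (simp add: Phi_def algebra_simps)
    next
      case False
      then show ?thesis by (simp add: G_def Phi_def prob_space)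
    qed
    finally show ?thesis .
  qed
  have Phim: "Phi B t k (PF E' S') \<in> borel_measurable borel"
    by (rule Phi_meas[OF PFm Bm])
  have s9: "(\<integral>e. Phi B t k (PF E' S') e \<partial>?LE) = (\<integral>\<omega>. Phi B t k (PF E' S') (E 0 \<omega>) \<partial>M)"
    by (rule integral_distr[OF E0m Phim])
  show ?thesis
    using s1 s3 s4 s5' s6 s7 s9 by (simp add: s8 E'_def S'_def)
qed


lemma pow_fact_le_exp: assumes "(y::real) \<ge> 0" shows "y ^ k / fact k \<le> exp y"
proof -
  have "y ^ k / fact k \<le> (\<Sum>n\<le>k. y ^ n / fact n)"
    using assms by (intro member_le_sum) auto
  also have "\<dots> \<le> exp y"
    using assms summable_exp_generic[of y]
    by (auto simp: exp_def divide_inverse ac_simps intro!: sum_le_suminf)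
  finally show ?thesis .
qed

lemma pois_nonneg: "y \<ge> 0 \<Longrightarrow> 0 \<le> poisson_prob y k"
  by (simp add: poisson_prob_def)

lemma pois_le1: assumes "y \<ge> 0" shows "poisson_prob y k \<le> 1"
proof -
  have "poisson_prob y k = exp (- y) * (y ^ k / fact k)" by (simp add: poisson_prob_def)
  also have "\<dots> \<le> exp (- y) * exp y" using pow_fact_le_exp[OF assms, of k] by (intro mult_left_mono) auto
  also have "\<dots> = 1" by (simp add: exp_minus)
  finally show ?thesis .
qed

definition pm :: "real \<Rightarrow> nat \<Rightarrow> real" where
  "pm y k = (if k = 0 then 0 else poisson_prob y (k - 1))"

lemma pois_deriv: "((\<lambda>y. poisson_prob y k) has_real_derivative (pm y k - poisson_prob y k)) (at y)"
proof (cases k)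
  case 0
  then show ?thesis unfolding poisson_prob_def pm_def
    by (auto intro!: derivative_eq_intros)
next
  case (Suc m)
  have "((\<lambda>y. y ^ k / fact k * exp (- y)) has_real_derivative
      (real k * y ^ (k - 1) * 1 / fact k * exp (- y) + y ^ k / fact k * (exp (- y) * (- 1)))) (at y)"
    by (auto intro!: derivative_eq_intros simp: diff_divide_distrib)
  moreover have "real k * y ^ (k - 1) * 1 / fact k * exp (- y) + y ^ k / fact k * (exp (- y) * (- 1))
      = pm y k - poisson_prob y k"
  proof -
    have f: "real k / fact k = 1 / fact m" using Suc by (simp add: fact_Suc del: of_nat_Suc)
    have "real k * y ^ (k - 1) * 1 / fact k * exp (- y) + y ^ k / fact k * (exp (- y) * (- 1))
       = (real k / fact k) * y ^ m * exp (- y) - y ^ k / fact k * exp (- y)" using Suc by simp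
    also have "\<dots> = y ^ m / fact m * exp (- y) - y ^ k / fact k * exp (- y)" unfolding f by simp
    finally show ?thesis using Suc by (simp add: pm_def poisson_prob_def)
  qed
  ultimately show ?thesis unfolding poisson_prob_def[abs_def] by simp
qed

lemma pm_bounds: "y \<ge> 0 \<Longrightarrow> 0 \<le> pm y k \<and> pm y k \<le> 1"
  by (simp add: pm_def pois_nonneg pois_le1)

lemma pois_lip: assumes "y1 \<ge> 0" "y2 \<ge> 0"
  shows "\<bar>poisson_prob y1 k - poisson_prob y2 k\<bar> \<le> \<bar>y1 - y2\<bar>"
proof -
  have main: "\<bar>poisson_prob b k - poisson_prob a k\<bar> \<le> \<bar>b - a\<bar>" if "0 \<le> a" "a < b" for a b
  proof -
    obtain z where z: "a < z" "z < b" "poisson_prob b k - poisson_prob a k = (b - a) * (pm z k - poisson_prob z k)"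
      using MVT2[OF \<open>a < b\<close>, of "\<lambda>y. poisson_prob y k" "\<lambda>y. pm y k - poisson_prob y k"] pois_deriv by blast
    have "z \<ge> 0" using z that by auto
    then have "\<bar>pm z k - poisson_prob z k\<bar> \<le> 1" using pm_bounds[of z k] pois_nonneg[of z k] pois_le1[of z k] by auto
    then show ?thesis using z(3) that by (simp add: abs_mult mult_left_le)
  qed
  show ?thesis
  proof (cases y1 y2 rule: linorder_cases)
    case less then show ?thesis using main[OF assms(1) less] by (simp add: abs_minus_commute)
  next
    case greater then show ?thesis using main[OF assms(2) greater] by simp
  qed simp
qed


definition abar :: "(real \<Rightarrow> real) \<Rightarrow> real \<Rightarrow> real" where
  "abar B t = integral {0..t} (\<lambda>x. 1 - B x)"

definition pp :: "real \<Rightarrow> (real \<Rightarrow> real) \<Rightarrow> real \<Rightarrow> nat \<Rightarrow> real" where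
  "pp lam B v k = poisson_prob (lam * abar B v) k"

lemma abar_neg: "t < 0 \<Longrightarrow> abar B t = 0"
  by (simp add: abar_def)

lemma abar_0: "abar B 0 = 0"
  by (simp add: abar_def)

lemma abar_vd:
  assumes Bc: "continuous_on UNIV B" and x: "x \<in> {0..T}"
  shows "(abar B has_vector_derivative (1 - B x)) (at x within {0..T})"
proof -
  have "continuous_on {0..T} (\<lambda>x. 1 - B x)"
    using Bc by (intro continuous_intros) (auto intro: continuous_on_subset)
  from integral_has_vector_derivative[OF this x] show ?thesis by (simp add: abar_def[abs_def])
qed

lemma abar_deriv:
  assumes Bc: "continuous_on UNIV B" and xpos: "0 < x"
  shows "(abar B has_real_derivative (1 - B x)) (at x)"
proof -
  have xi: "x \<in> {0..x+1}" using xpos by auto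
  have vd: "(abar B has_vector_derivative (1 - B x)) (at x within {0..x+1})"
    by (rule abar_vd[OF Bc xi])
  have int: "x \<in> interior {0..x+1}" using xpos by auto
  have "(abar B has_vector_derivative (1 - B x)) (at x)"
    using vd unfolding at_within_interior[OF int] .
  then show ?thesis by (simp add: has_real_derivative_iff_has_vector_derivative)
qed

lemma abar_cont: assumes Bc: "continuous_on UNIV B" shows "continuous_on {0..T} (abar B)"
  unfolding continuous_on_eq_continuous_within
proof
  fix x assume "x \<in> {0..T}"
  from has_vector_derivative_continuous[OF abar_vd[OF Bc this]] show "continuous (at x within {0..T}) (abar B)" .
qed

lemma abar_nonneg: assumes Bc: "continuous_on UNIV B" and B1: "\<And>x. B x \<le> 1" shows "0 \<le> abar B t"
proof (cases "t < 0")
  case True then show ?thesis by (simp add: abar_neg)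
next
  case False
  have "continuous_on {0..t} (\<lambda>x. 1 - B x)"
    using Bc by (intro continuous_intros) (auto intro: continuous_on_subset)
  then have "(\<lambda>x. 1 - B x) integrable_on {0..t}" by (rule integrable_continuous_real)
  then show ?thesis unfolding abar_def using B1 by (intro integral_nonneg) auto
qed

lemma abar_mono: assumes Bc: "continuous_on UNIV B" and B1: "\<And>x. B x \<le> 1" shows "mono (abar B)"
proof (rule monoI)
  fix s t :: real assume st: "s \<le> t"
  show "abar B s \<le> abar B t"
  proof (cases "s < 0")
    case True then show ?thesis using abar_nonneg[OF Bc B1, of t] by (simp add: abar_neg)
  next
    case False
    have ct: "continuous_on {0..t} (\<lambda>x. 1 - B x)"
      using Bc by (intro continuous_intros) (auto intro: continuous_on_subset)
    have "integral {0..s} (\<lambda>x. 1 - B x) + integral {s..t} (\<lambda>x. 1 - B x) = integral {0..t} (\<lambda>x. 1 - B x)"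
      using False st by (intro Henstock_Kurzweil_Integration.integral_combine integrable_continuous_real ct) auto
    moreover have "0 \<le> integral {s..t} (\<lambda>x. 1 - B x)"
      using B1 st False by (intro integral_nonneg integrable_continuous_real continuous_on_subset[OF ct]) auto
    ultimately show ?thesis by (simp add: abar_def)
  qed
qed

lemma pp_meas: assumes Bc: "continuous_on UNIV B" and B1: "\<And>x. B x \<le> 1"
  shows "(\<lambda>v. pp lam B v j) \<in> borel_measurable borel"
proof -
  have [measurable]: "abar B \<in> borel_measurable borel" by (rule borel_measurable_mono[OF abar_mono[OF Bc B1]])
  show ?thesis unfolding pp_def poisson_prob_def by measurable
qed

lemma pois_cont: "continuous_on S (\<lambda>y. poisson_prob y k)"
  unfolding poisson_prob_def by (intro continuous_intros) auto


lemma (in prob_space) cand: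
  assumes D: "distributed M lborel X (exponential_density lam)" and lam: "lam > 0" and u: "u \<ge> 0"
    and Bc: "continuous_on UNIV B" and B1: "\<And>x. B x \<le> 1" and B0: "\<And>x. 0 \<le> B x"
  shows "pp lam B u k = (\<integral>\<omega>. Phi B u k (pp lam B) (X \<omega>) \<partial>M)"
proof -
  define c0 where "c0 = poisson_prob 0 k"
  define q where "q = (\<lambda>e. B (u - e) * pp lam B (u - e) k + (1 - B (u - e)) * pm (lam * abar B (u - e)) k)"
  have Xm: "X \<in> borel_measurable M" using distributed_measurable[OF D] by simp
  have Bm: "B \<in> borel_measurable borel" using Bc by (rule borel_measurable_continuous_onI)
  have abm: "abar B \<in> borel_measurable borel" by (rule borel_measurable_mono[OF abar_mono[OF Bc B1]])
  have qm: "q \<in> borel_measurable borel"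
  proof -
    have [measurable]: "(\<lambda>e. B (u - e)) \<in> borel_measurable borel"
      using measurable_compose[of "\<lambda>e. u - e" borel borel B] Bm by auto
    have [measurable]: "(\<lambda>e. abar B (u - e)) \<in> borel_measurable borel"
      using measurable_compose[of "\<lambda>e. u - e" borel borel "abar B"] abm by auto
    show ?thesis unfolding q_def pp_def pm_def poisson_prob_def by measurable
  qed
  have ppb: "0 \<le> pp lam B v j \<and> pp lam B v j \<le> 1" for v j
    using abar_nonneg[OF Bc B1, of v] lam unfolding pp_def by (intro conjI pois_nonneg pois_le1) auto
  have pmb: "0 \<le> pm (lam * abar B v) j \<and> pm (lam * abar B v) j \<le> 1" for v j
    using abar_nonneg[OF Bc B1, of v] lam by (intro pm_bounds) auto
  have qb: "\<bar>q e\<bar> \<le> 1" for e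
  proof -
    have a: "0 \<le> B (u - e)" "B (u - e) \<le> 1" using B0 B1 by auto
    have "0 \<le> q e" unfolding q_def using a ppb pmb by (intro add_nonneg_nonneg mult_nonneg_nonneg) auto
    moreover have "q e \<le> B (u - e) * 1 + (1 - B (u - e)) * 1"
      unfolding q_def using a ppb pmb by (intro add_mono mult_left_mono) auto
    ultimately show ?thesis by simp
  qed
  have Phi_eq: "Phi B u k (pp lam B) e = c0 * indicator {u<..} e + indicator {..u} e * q e" for e
    by (auto simp: Phi_def q_def pm_def pp_def c0_def abar_neg indicator_def)
  note [measurable] = Xm qm
  have i1m: "(\<lambda>\<omega>. indicator {..u} (X \<omega>) * q (X \<omega>)) \<in> borel_measurable M"
    by measurable
  have int1: "integrable M (\<lambda>\<omega>. indicator {..u} (X \<omega>) * q (X \<omega>))"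
    by (rule integrable_const_bound[where B=1]) (auto simp: i1m indicator_def qb)
  have Us: "{\<omega> \<in> space M. u < X \<omega>} \<in> events" by measurable
  have int0: "integrable M (\<lambda>\<omega>. c0 * indicator {\<omega> \<in> space M. u < X \<omega>} \<omega>)"
    using Us by (intro integrable_mult_right integrable_real_indicator) (auto simp: emeasure_eq_measure)
  have "(\<integral>\<omega>. Phi B u k (pp lam B) (X \<omega>) \<partial>M) =
      (\<integral>\<omega>. c0 * indicator {\<omega> \<in> space M. u < X \<omega>} \<omega> + indicator {..u} (X \<omega>) * q (X \<omega>) \<partial>M)"
    by (intro Bochner_Integration.integral_cong) (auto simp: Phi_eq indicator_def)
  also have "\<dots> = c0 * prob {\<omega> \<in> space M. u < X \<omega>} + (\<integral>\<omega>. indicator {..u} (X \<omega>) * q (X \<omega>) \<partial>M)"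
    using Us by (simp add: Bochner_Integration.integral_add[OF int0 int1])
  also have "prob {\<omega> \<in> space M. u < X \<omega>} = exp (- u * lam)"
    using exponential_distributedD_gt[OF D u lam] by simp
  finally have split: "(\<integral>\<omega>. Phi B u k (pp lam B) (X \<omega>) \<partial>M) =
      c0 * exp (- u * lam) + (\<integral>\<omega>. indicator {..u} (X \<omega>) * q (X \<omega>) \<partial>M)" .
  let ?g = "\<lambda>x. indicator {..u} x * q x :: real"
  have gm: "?g \<in> borel_measurable lborel" using qm by simp
  have dnn: "\<And>x. 0 \<le> exponential_density lam x" using lam by (rule exponential_density_nonneg)
  have "(\<integral>\<omega>. indicator {..u} (X \<omega>) * q (X \<omega>) \<partial>M) = (\<integral>x. exponential_density lam x * ?g x \<partial>lborel)"
    by (rule distributed_integral[OF D gm dnn, symmetric])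
  also have "\<dots> = integral UNIV (\<lambda>x. exponential_density lam x * ?g x)"
  proof (rule integral_lborel[symmetric])
    show "integrable lborel (\<lambda>x. exponential_density lam x * ?g x)"
      using distributed_integrable[OF D gm dnn] int1 by simp
  qed
  also have "\<dots> = integral UNIV (\<lambda>x. if x \<in> {0..u} then lam * exp (- x * lam) * q x else 0)"
    by (intro arg_cong[where f="integral UNIV"] ext) (auto simp: exponential_density_def indicator_def)
  also have "\<dots> = integral {0..u} (\<lambda>x. lam * exp (- x * lam) * q x)"
    by (rule integral_restrict_UNIV)
  finally have hk: "(\<integral>\<omega>. indicator {..u} (X \<omega>) * q (X \<omega>) \<partial>M) = integral {0..u} (\<lambda>x. lam * exp (- x * lam) * q x)" .
  define H where "H = (\<lambda>x. - exp (- x * lam) * pp lam B (u - x) k)"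
  have contH: "continuous_on {0..u} H"
  proof -
    have c1: "continuous_on {0..u} (\<lambda>x. abar B (u - x))"
      by (rule continuous_on_compose2[OF abar_cont[OF Bc, of u]]) (auto intro!: continuous_intros)
    have c2: "continuous_on {0..u} (\<lambda>x. poisson_prob (lam * abar B (u - x)) k)"
      by (rule continuous_on_compose2[OF pois_cont[of UNIV k]]) (auto intro!: continuous_intros c1)
    show ?thesis unfolding H_def pp_def by (intro continuous_intros c2)
  qed
  have derH: "(H has_vector_derivative (lam * exp (- x * lam) * q x)) (at x)" if x: "x \<in> {0<..<u}" for x
  proof -
    have ux: "0 < u - x" using x by auto
    have da: "((\<lambda>x. abar B (u - x)) has_real_derivative (1 - B (u - x)) * (- 1)) (at x)"
      by (rule DERIV_chain2[where g="\<lambda>x. u - x", OF abar_deriv[OF Bc ux]]) (auto intro!: derivative_eq_intros)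
    have dla: "((\<lambda>x. lam * abar B (u - x)) has_real_derivative lam * ((1 - B (u - x)) * (- 1))) (at x)"
      by (rule DERIV_cmult[OF da])
    let ?y = "lam * abar B (u - x)"
    have dp: "((\<lambda>x. poisson_prob (lam * abar B (u - x)) k) has_real_derivative
        (pm ?y k - poisson_prob ?y k) * (lam * ((1 - B (u - x)) * (- 1)))) (at x)"
      by (rule DERIV_chain2[where g="\<lambda>x. lam * abar B (u - x)", OF pois_deriv dla])
    have de: "((\<lambda>x. - exp (- x * lam)) has_real_derivative exp (- x * lam) * lam) (at x)"
      by (auto intro!: derivative_eq_intros)
    have "(H has_real_derivative (exp (- x * lam) * lam * poisson_prob ?y k +
        (pm ?y k - poisson_prob ?y k) * (lam * ((1 - B (u - x)) * (- 1))) * (- exp (- x * lam)))) (at x)"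
      unfolding H_def pp_def using DERIV_mult[OF de dp] by simp
    moreover have "exp (- x * lam) * lam * poisson_prob ?y k +
        (pm ?y k - poisson_prob ?y k) * (lam * ((1 - B (u - x)) * (- 1))) * (- exp (- x * lam))
        = lam * exp (- x * lam) * q x"
      unfolding q_def pp_def by (simp add: algebra_simps)
    ultimately show ?thesis by (simp add: has_real_derivative_iff_has_vector_derivative)
  qed
  have ftc: "((\<lambda>x. lam * exp (- x * lam) * q x) has_integral (H u - H 0)) {0..u}"
    by (rule fundamental_theorem_of_calculus_interior[OF u contH derH])
  have "integral {0..u} (\<lambda>x. lam * exp (- x * lam) * q x) = H u - H 0"
    by (rule integral_unique[OF ftc])
  also have "\<dots> = pp lam B u k - exp (- u * lam) * c0"
    by (simp add: H_def pp_def abar_0 c0_def)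
  finally show ?thesis using split hk by simp
qed


lemma pois_0: "poisson_prob 0 j = (if j = 0 then 1 else 0)"
  by (simp add: poisson_prob_def)

lemma (in prob_space) PF_neg:
  assumes F: "fam lam B E S" and lam: "lam > 0" and v: "v < 0"
  shows "PF E S v j = poisson_prob 0 j"
proof -
  have ae: "AE \<omega> in M. ql v (vec E S \<omega>) = 0"
    using fam_E_pos[OF F lam]
  proof eventually_elim
    case (elim \<omega>)
    have "\<And>n. vec E S \<omega> (Inl n) \<ge> 0" using elim by (simp add: fam_vec_Inl less_imp_le)
    from QS_neg[where x="vec E S \<omega>", OF this v] show ?case by (simp add: ql_def)
  qed
  show ?thesis
  proof (cases "j = 0")
    case True
    have "prob {\<omega> \<in> space M. ql v (vec E S \<omega>) = j} = prob (space M)"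
      by (rule finite_measure_eq_AE) (use ae True PF_sets[OF F] in auto)
    then show ?thesis using True by (simp add: PF_def pois_0 prob_space)
  next
    case False
    have "prob {\<omega> \<in> space M. ql v (vec E S \<omega>) = j} = prob {}"
      by (rule finite_measure_eq_AE) (use ae False PF_sets[OF F] in auto)
    then show ?thesis using False by (simp add: PF_def pois_0)
  qed
qed

lemma Phi_bound:
  assumes f: "\<And>v j. 0 \<le> f v j \<and> f v j \<le> 1" and B: "\<And>x. 0 \<le> B x \<and> B x \<le> 1"
  shows "\<bar>Phi B t k f e\<bar> \<le> 1"
proof -
  have a: "0 \<le> B (t - e)" "B (t - e) \<le> 1" using B by auto
  have g: "0 \<le> (if k = 0 then 0 else f (t - e) (k - 1)) \<and> (if k = 0 then 0 else f (t - e) (k - 1)) \<le> 1"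
    using f by auto
  have "0 \<le> B (t - e) * f (t - e) k + (1 - B (t - e)) * (if k = 0 then 0 else f (t - e) (k - 1))"
    using a f g by (intro add_nonneg_nonneg mult_nonneg_nonneg) auto
  moreover have "B (t - e) * f (t - e) k + (1 - B (t - e)) * (if k = 0 then 0 else f (t - e) (k - 1)) \<le> B (t - e) * 1 + (1 - B (t - e)) * 1"
    using a f g by (intro add_mono mult_left_mono) auto
  ultimately show ?thesis using f[of "t - e" k] unfolding Phi_def by auto
qed

lemma Phi_diff:
  assumes d: "\<And>w j. w \<le> T \<Longrightarrow> \<bar>f1 w j - f2 w j\<bar> \<le> (if w < 0 then 0 else K)"
    and B: "\<And>x. 0 \<le> B x \<and> B x \<le> 1" and e: "0 \<le> e" and v: "v \<le> T"
  shows "\<bar>Phi B v j f1 e - Phi B v j f2 e\<bar> \<le> K * indicator {..v} e"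
proof (cases "e \<le> v")
  case True
  have w: "v - e \<le> T" "\<not> v - e < 0" using True e v by auto
  have K: "0 \<le> K" using d[OF w(1), of j] w by auto
  have d1: "\<bar>f1 (v - e) j - f2 (v - e) j\<bar> \<le> K" using d[OF w(1), of j] w by simp
  have d2: "\<bar>(if j = 0 then 0 else f1 (v - e) (j - 1)) - (if j = 0 then 0 else f2 (v - e) (j - 1))\<bar> \<le> K"
    using d[OF w(1), of "j - 1"] w K by auto
  have a: "0 \<le> B (v - e)" "B (v - e) \<le> 1" using B by auto
  have "Phi B v j f1 e - Phi B v j f2 e = B (v - e) * (f1 (v - e) j - f2 (v - e) j) +
     (1 - B (v - e)) * ((if j = 0 then 0 else f1 (v - e) (j - 1)) - (if j = 0 then 0 else f2 (v - e) (j - 1)))"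
    using True by (simp add: Phi_def algebra_simps)
  also have "\<bar>\<dots>\<bar> \<le> B (v - e) * K + (1 - B (v - e)) * K"
    using a d1 d2
    by (intro order_trans[OF abs_triangle_ineq] add_mono) (auto simp: abs_mult intro: mult_left_mono)
  finally show ?thesis using True by (simp add: algebra_simps)
next
  case False
  have w: "v - e \<le> T" "v - e < 0" using False e v by auto
  have "\<bar>f1 (v - e) j - f2 (v - e) j\<bar> \<le> 0" using d[OF w(1), of j] w by simp
  then show ?thesis using False by (simp add: Phi_def)
qed

lemma (in prob_space) gron:
  assumes lam: "lam > 0" and Bc: "continuous_on UNIV B" and B1: "\<And>x. B x \<le> 1" and B0: "\<And>x. 0 \<le> B x"
    and T: "T \<ge> 0"
  shows "\<forall>E S. fam lam B E S \<longrightarrow> (\<forall>v j. v \<le> T \<longrightarrow>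
     \<bar>PF E S v j - pp lam B v j\<bar> \<le> (if v < 0 then 0 else 2 * (1 - exp (- T * lam)) ^ n))"
proof (induction n)
  have ppb: "0 \<le> pp lam B v j \<and> pp lam B v j \<le> 1" for v j
    using abar_nonneg[OF Bc B1, of v] lam unfolding pp_def by (intro conjI pois_nonneg pois_le1) auto
  have ppneg: "v < 0 \<Longrightarrow> pp lam B v j = poisson_prob 0 j" for v j by (simp add: pp_def abar_neg)
  case 0
  show ?case
  proof (intro allI impI)
    fix E S v j assume F: "fam lam B E S" and "v \<le> T"
    show "\<bar>PF E S v j - pp lam B v j\<bar> \<le> (if v < 0 then 0 else 2 * (1 - exp (- T * lam)) ^ 0)"
    proof (cases "v < 0")
      case True then show ?thesis using PF_neg[OF F lam True] ppneg[OF True] by simp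
    next
      case False then show ?thesis using ppb[of v j] PF_bounds[of E S v j] by auto
    qed
  qed
next
  have ppb: "0 \<le> pp lam B v j \<and> pp lam B v j \<le> 1" for v j
    using abar_nonneg[OF Bc B1, of v] lam unfolding pp_def by (intro conjI pois_nonneg pois_le1) auto
  have ppneg: "v < 0 \<Longrightarrow> pp lam B v j = poisson_prob 0 j" for v j by (simp add: pp_def abar_neg)
  have Bm: "B \<in> borel_measurable borel" using Bc by (rule borel_measurable_continuous_onI)
  have Bb: "\<And>x. 0 \<le> B x \<and> B x \<le> 1" using B0 B1 by auto
  let ?c = "1 - exp (- T * lam)"
  have c: "0 \<le> ?c" using T lam by auto
  case (Suc n)
  show ?case
  proof (intro allI impI)
    fix E S v j assume F: "fam lam B E S" and vT: "v \<le> T"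
    show "\<bar>PF E S v j - pp lam B v j\<bar> \<le> (if v < 0 then 0 else 2 * ?c ^ Suc n)"
    proof (cases "v < 0")
      case True then show ?thesis using PF_neg[OF F lam True] ppneg[OF True] by simp
    next
      case False
      define E' where "E' = (\<lambda>n. E (Suc n))"
      define S' where "S' = (\<lambda>n. S (Suc n))"
      have F': "fam lam B E' S'" unfolding E'_def S'_def by (rule fam_shift[OF F])
      let ?K = "2 * ?c ^ n"
      have IH: "\<And>w i. w \<le> T \<Longrightarrow> \<bar>PF E' S' w i - pp lam B w i\<bar> \<le> (if w < 0 then 0 else ?K)"
        using Suc F' by blast
      have D: "distributed M lborel (E 0) (exponential_density lam)" using F unfolding fam_def by auto
      have E0m: "E 0 \<in> borel_measurable M" by (rule fam_E_meas[OF F])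
      have r1: "PF E S v j = (\<integral>\<omega>. Phi B v j (PF E' S') (E 0 \<omega>) \<partial>M)"
        unfolding E'_def S'_def by (rule recursion[OF F lam Bm])
      have r2: "pp lam B v j = (\<integral>\<omega>. Phi B v j (pp lam B) (E 0 \<omega>) \<partial>M)"
        using False by (intro cand[OF D lam _ Bc B1 B0]) auto
      have m1: "(\<lambda>\<omega>. Phi B v j (PF E' S') (E 0 \<omega>)) \<in> borel_measurable M"
        using measurable_compose[OF E0m Phi_meas[OF PF_meas[OF F'] Bm]] .
      have m2: "(\<lambda>\<omega>. Phi B v j (pp lam B) (E 0 \<omega>)) \<in> borel_measurable M"
        using measurable_compose[OF E0m Phi_meas[OF pp_meas[OF Bc B1] Bm]] .
      have pfb: "\<And>v j. 0 \<le> PF E' S' v j \<and> PF E' S' v j \<le> 1" using PF_bounds by auto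
      have i1: "integrable M (\<lambda>\<omega>. Phi B v j (PF E' S') (E 0 \<omega>))"
        by (rule integrable_const_bound[where B=1]) (auto intro!: m1 AE_I2 simp: Phi_bound[OF pfb Bb])
      have i2: "integrable M (\<lambda>\<omega>. Phi B v j (pp lam B) (E 0 \<omega>))"
        by (rule integrable_const_bound[where B=1]) (auto intro!: m2 AE_I2 simp: Phi_bound[OF ppb Bb])
      let ?U = "{\<omega> \<in> space M. E 0 \<omega> \<le> v}"
      have Us: "?U \<in> events" using E0m by measurable
      have iK: "integrable M (\<lambda>\<omega>. ?K * indicator ?U \<omega>)"
        using Us by (intro integrable_mult_right integrable_real_indicator) (auto simp: emeasure_eq_measure)
      have "\<bar>PF E S v j - pp lam B v j\<bar> = \<bar>\<integral>\<omega>. Phi B v j (PF E' S') (E 0 \<omega>) - Phi B v j (pp lam B) (E 0 \<omega>) \<partial>M\<bar>"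
        using r1 r2 by (simp add: Bochner_Integration.integral_diff[OF i1 i2])
      also have "\<dots> \<le> (\<integral>\<omega>. \<bar>Phi B v j (PF E' S') (E 0 \<omega>) - Phi B v j (pp lam B) (E 0 \<omega>)\<bar> \<partial>M)"
        by (rule integral_abs_bound)
      also have "\<dots> \<le> (\<integral>\<omega>. ?K * indicator ?U \<omega> \<partial>M)"
      proof (rule integral_mono_AE)
        show "integrable M (\<lambda>\<omega>. \<bar>Phi B v j (PF E' S') (E 0 \<omega>) - Phi B v j (pp lam B) (E 0 \<omega>)\<bar>)"
          using i1 i2 by auto
        show "integrable M (\<lambda>\<omega>. ?K * indicator ?U \<omega>)" by (rule iK)
        show "AE \<omega> in M. \<bar>Phi B v j (PF E' S') (E 0 \<omega>) - Phi B v j (pp lam B) (E 0 \<omega>)\<bar> \<le> ?K * indicator ?U \<omega>"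
          using fam_E_pos[OF F lam]
        proof (rule AE_mp[OF _ AE_I2], intro impI)
          fix \<omega> assume sp: "\<omega> \<in> space M" and pos: "\<forall>n. 0 < E n \<omega>"
          have "\<bar>Phi B v j (PF E' S') (E 0 \<omega>) - Phi B v j (pp lam B) (E 0 \<omega>)\<bar> \<le> ?K * indicator {..v} (E 0 \<omega>)"
            using pos by (intro Phi_diff[OF IH Bb _ vT]) (auto simp: less_imp_le)
          then show "\<bar>Phi B v j (PF E' S') (E 0 \<omega>) - Phi B v j (pp lam B) (E 0 \<omega>)\<bar> \<le> ?K * indicator ?U \<omega>"
            using sp by (simp add: indicator_def)
        qed
      qed
      also have "\<dots> = ?K * prob ?U" using Us by simp
      also have "prob ?U = 1 - exp (- v * lam)"
        using exponential_distributedD_le[OF D _ lam, of v] False by simp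
      also have "?K * (1 - exp (- v * lam)) \<le> ?K * ?c"
        using vT lam c by (intro mult_left_mono) auto
      finally show ?thesis using False by (simp add: mult.commute mult.left_commute)
    qed
  qed
qed

lemma (in prob_space) PF_eq_pp:
  assumes F: "fam lam B E S" and lam: "lam > 0" and Bc: "continuous_on UNIV B" and B1: "\<And>x. B x \<le> 1" and B0: "\<And>x. 0 \<le> B x"
    and t: "t \<ge> 0"
  shows "PF E S t k = pp lam B t k"
proof -
  let ?c = "1 - exp (- t * lam)"
  have c: "0 \<le> ?c" "?c < 1" using t lam by auto
  have b: "\<bar>PF E S t k - pp lam B t k\<bar> \<le> 2 * ?c ^ n" for n
  proof -
    have "\<forall>v j. v \<le> t \<longrightarrow> \<bar>PF E S v j - pp lam B v j\<bar> \<le> (if v < 0 then 0 else 2 * ?c ^ n)"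
      using gron[OF lam Bc B1 B0 t, of n] F by blast
    then have "\<bar>PF E S t k - pp lam B t k\<bar> \<le> (if t < 0 then 0 else 2 * ?c ^ n)" by blast
    then show ?thesis using t by (simp only: if_not_P[of "t < 0"] not_less)
  qed
  have lim: "(\<lambda>n. 2 * ?c ^ n) \<longlonglongrightarrow> 2 * 0" using c by (intro tendsto_mult tendsto_const LIMSEQ_power_zero) auto
  have "\<bar>PF E S t k - pp lam B t k\<bar> \<le> 2 * 0"
    by (rule LIMSEQ_le_const[OF lim]) (use b in blast)
  then show ?thesis by simp
qed


lemma tail_est:
  assumes Bc: "continuous_on UNIV B" and B1: "\<And>x. B x \<le> 1"
    and C: "C > 0" and mu: "\<mu> > 0" and tail: "\<And>x. x \<ge> 0 \<Longrightarrow> 1 - B x \<le> C * exp (- \<mu> * x)"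
    and t: "t \<ge> 0"
  shows "abar B t \<le> (LINT x:{0..}|lborel. 1 - B x)"
    and "(LINT x:{0..}|lborel. 1 - B x) - abar B t \<le> C / \<mu> * exp (- \<mu> * t)"
proof -
  let ?f = "\<lambda>x. 1 - B x :: real"
  have fc: "continuous_on S ?f" for S using Bc by (intro continuous_intros) (auto intro: continuous_on_subset)
  have fnn: "0 \<le> ?f x" for x using B1[of x] by simp
  have tailc: "?f integrable_on {c..} \<and> integral {c..} ?f \<le> C * (exp (- \<mu> * c) / \<mu>)" if c: "c \<ge> 0" for c
  proof -
    have g: "((\<lambda>x. C * exp (- \<mu> * x)) has_integral C * (exp (- \<mu> * c) / \<mu>)) {c..}"
      by (intro has_integral_mult_right has_integral_exp_minus_to_infinity mu)
    have fi: "?f integrable_on {c..}"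
    proof (rule measurable_bounded_by_integrable_imp_integrable_real)
      show "?f \<in> borel_measurable (lebesgue_on {c..})"
        by (rule continuous_imp_measurable_on_sets_lebesgue[OF fc]) auto
      show "(\<lambda>x. C * exp (- \<mu> * x)) integrable_on {c..}" using g by blast
      show "\<bar>?f x\<bar> \<le> C * exp (- \<mu> * x)" if "x \<in> {c..}" for x
        using tail[of x] fnn[of x] that c by auto
    qed auto
    have "integral {c..} ?f \<le> integral {c..} (\<lambda>x. C * exp (- \<mu> * x))"
      using tail c by (intro integral_le fi) (use g in \<open>auto simp: integrable_on_def\<close>)
    also have "\<dots> = C * (exp (- \<mu> * c) / \<mu>)" using g by (rule integral_unique)
    finally show ?thesis using fi by simp
  qed
  have i0t: "(?f has_integral abar B t) {0..t}"
    unfolding abar_def by (intro integrable_integral integrable_continuous_real fc)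
  have itt: "(?f has_integral integral {t..} ?f) {t..}" using tailc[OF t] by (simp add: integrable_integral)
  have "(?f has_integral (abar B t + integral {t..} ?f)) ({0..t} \<union> {t..})"
  proof (rule has_integral_Un[OF i0t itt])
    have "{0..t} \<inter> {t..} = {t}" using t by auto
    then show "negligible ({0..t} \<inter> {t..})" by simp
  qed
  moreover have "{0..t} \<union> {t..} = {0::real..}" using t by auto
  ultimately have i0: "(?f has_integral (abar B t + integral {t..} ?f)) {0..}" by simp
  have "?f absolutely_integrable_on {0..}"
    using i0 fnn by (intro nonnegative_absolutely_integrable_1) (auto simp: integrable_on_def)
  then have sil: "set_integrable lebesgue {0..} ?f" by (simp add: absolutely_integrable_on_def)
  have "(LINT x:{0..}|lebesgue. ?f x) = integral {0..} ?f"
    by (rule set_lebesgue_integral_eq_integral(2)[OF sil])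
  moreover have "(LINT x:{0..}|lebesgue. ?f x) = (LINT x:{0..}|lborel. ?f x)"
  proof -
    have Bm: "B \<in> borel_measurable borel" using Bc by (rule borel_measurable_continuous_onI)
    have "(\<lambda>x. indicator {0..} x *\<^sub>R ?f x) \<in> borel_measurable lborel" using Bm by simp
    then show ?thesis unfolding set_lebesgue_integral_def by (rule integral_completion)
  qed
  moreover have "integral {0..} ?f = abar B t + integral {t..} ?f" using i0 by (rule integral_unique)
  ultimately have rho: "(LINT x:{0..}|lborel. ?f x) = abar B t + integral {t..} ?f" by simp
  have "0 \<le> integral {t..} ?f" using tailc[OF t] fnn by (intro integral_nonneg) auto
  then show "abar B t \<le> (LINT x:{0..}|lborel. 1 - B x)" using rho by simp
  show "(LINT x:{0..}|lborel. 1 - B x) - abar B t \<le> C / \<mu> * exp (- \<mu> * t)"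
    using rho tailc[OF t] by simp
qed


theorem mainTheorem2:
  fixes M :: "'a measure"
    and E S :: "nat \<Rightarrow> 'a \<Rightarrow> real"
    and B :: "real \<Rightarrow> real"
    and lam C \<mu> :: real
  assumes "prob_space M"
    and lam: "lam > 0"
    and indep: "prob_space.indep_vars M (\<lambda>_. borel)
                  (\<lambda>i. case i of Inl n \<Rightarrow> E n | Inr n \<Rightarrow> S n) (UNIV :: (nat + nat) set)"
    and exp_arr: "\<And>n. distributed M lborel (E n) (exponential_density lam)"
    and serv_rv: "\<And>n. S n \<in> borel_measurable M"
    and serv_dist: "\<And>n x. measure M {\<omega> \<in> space M. S n \<omega> \<le> x} = B x"
    and B_cont: "continuous_on UNIV B"
    and B_nonneg_support: "\<And>x. x < 0 \<Longrightarrow> B x = 0"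
    and tail: "C > 0" "\<mu> > 0" "\<And>x. x \<ge> 0 \<Longrightarrow> 1 - B x \<le> C * exp (- \<mu> * x)"
  shows "\<exists>\<delta>>0. \<exists>C\<delta>>0.
           \<forall>t\<ge>0. (SUP k. \<bar>measure M {\<omega> \<in> space M. queue_length E S t \<omega> = k}
                          - poisson_prob (lam * (LINT x:{0..}|lborel. 1 - B x)) k\<bar>)
                  < C\<delta> * exp (- \<delta> * t)"
proof -
  interpret P: prob_space M by fact
  have vf: "vecf E S = (\<lambda>i. case i of Inl n \<Rightarrow> E n | Inr n \<Rightarrow> S n)"
    by (auto simp: vecf_def fun_eq_iff)
  have F: "P.fam lam B E S"
    unfolding P.fam_def vf using indep exp_arr serv_rv serv_dist by auto
  have B0: "0 \<le> B x" for x using serv_dist[of 0 x] by (metis measure_nonneg)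
  have B1: "B x \<le> 1" for x using serv_dist[of 0 x] P.prob_le_1 by metis
  define \<rho> where "\<rho> = (LINT x:{0..}|lborel. 1 - B x)"
  define K where "K = lam * C / \<mu>"
  have K: "K > 0" using lam tail by (simp add: K_def)
  have bound: "\<bar>measure M {\<omega> \<in> space M. queue_length E S t \<omega> = k} - poisson_prob (lam * \<rho>) k\<bar>
      \<le> K * exp (- \<mu> * t)" if t: "t \<ge> 0" for t k
  proof -
    have "measure M {\<omega> \<in> space M. queue_length E S t \<omega> = k} = P.PF E S t k"
      by (simp add: P.PF_def queue_length_ql)
    also have "\<dots> = pp lam B t k" by (rule P.PF_eq_pp[OF F lam B_cont B1 B0 t])
    finally have eq: "measure M {\<omega> \<in> space M. queue_length E S t \<omega> = k} = poisson_prob (lam * abar B t) k"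
      by (simp add: pp_def)
    have a0: "0 \<le> abar B t" by (rule abar_nonneg[OF B_cont B1])
    have r1: "abar B t \<le> \<rho>" unfolding \<rho>_def by (rule tail_est(1)[OF B_cont B1 tail t])
    have r2: "\<rho> - abar B t \<le> C / \<mu> * exp (- \<mu> * t)" unfolding \<rho>_def by (rule tail_est(2)[OF B_cont B1 tail t])
    have "\<bar>poisson_prob (lam * abar B t) k - poisson_prob (lam * \<rho>) k\<bar> \<le> \<bar>lam * abar B t - lam * \<rho>\<bar>"
      using a0 r1 lam by (intro pois_lip) auto
    also have "\<dots> = lam * (\<rho> - abar B t)" using r1 lam by (simp add: abs_if algebra_simps)
    also have "\<dots> \<le> lam * (C / \<mu> * exp (- \<mu> * t))" using r2 lam by (intro mult_left_mono) auto
    also have "\<dots> = K * exp (- \<mu> * t)" by (simp add: K_def)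
    finally show ?thesis unfolding eq .
  qed
  have main: "\<forall>t\<ge>0. (SUP k. \<bar>measure M {\<omega> \<in> space M. queue_length E S t \<omega> = k} - poisson_prob (lam * \<rho>) k\<bar>)
      < (K + 1) * exp (- \<mu> * t)"
  proof (intro allI impI)
    fix t :: real assume t: "t \<ge> 0"
    have "(SUP k. \<bar>measure M {\<omega> \<in> space M. queue_length E S t \<omega> = k} - poisson_prob (lam * \<rho>) k\<bar>) \<le> K * exp (- \<mu> * t)"
      by (rule cSUP_least) (simp, rule bound[OF t])
    also have "\<dots> < (K + 1) * exp (- \<mu> * t)" by (simp add: distrib_right)
    finally show "(SUP k. \<bar>measure M {\<omega> \<in> space M. queue_length E S t \<omega> = k} - poisson_prob (lam * \<rho>) k\<bar>)
      < (K + 1) * exp (- \<mu> * t)" .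
  qed
  have "K + 1 > 0" using K by simp
  then show ?thesis using main tail(2) unfolding \<rho>_def by blast
qed


end
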